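(* Fix $\mu>0$, $\rho>0$ and $s\in\mathbb{R}^m$. For $a,b\in\mathbb{R}$ let $w(a,b;\mu,\rho)=\frac{1}{2\rho}\big(\sqrt{(b-\rho a)^2+4\rho\mu}-(b-\rho a)\big)$. Consider the logarithmic-barrier subproblem $$(\mathrm{LB})\quad \min_{x\in\mathbb{R}^n,\ z\in\mathbb{R}^m_{++}}\ f(x)-\mu\sum_{i=1}^m\ln z_i\quad\text{s.t.}\quad c(x)-z=0,$$ and the modified problem $$(\mathrm{MB}_s)\quad \min_{x\in\mathbb{R}^n}\ f(x)-\mu\sum_{i=1}^m\ln w(c_i(x),s_i;\mu,\rho)\quad\text{s.t.}\quad c_i(x)-w(c_i(x),s_i;\mu,\rho)=0,\ i=1,\dots,m.$$ (1) If $(x^*,z^* )$ is a local solution of (LB) and $c_i(x^* )=w(c_i(x^* ),s_i;\mu,\rho)$ for $i=1,\dots,m$, then $x^*$ is a local solution of $(\mathrm{MB}_s)$. (2) Suppose $((x^*,z^* ),s^* )$ is a KKT pair of (LB), i.e. $c(x^* )=z^*>0$, $\nabla f(x^* )-\nabla c(x^* )s^*=0$ and $s_i^*=\mu/z_i^*$ for all $i$. Then $c_i(x^* )=w(c_i(x^* ),s_i^*;\mu,\rho)$ for all $i$, and $x^*$ is a KKT point of $(\mathrm{MB}_{s^*})$ with Lagrange multiplier $s_i^*$ associated with the constraint $c_i(x)-w(c_i(x),s_i^*;\mu,\rho)=0$; that is, $\nabla_x L(x^*,s^*,s^* )=0$, where $$L(x,s,\lambda)=f(x)-\mu\sum_{i=1}^m\ln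 w(c_i(x),s_i;\mu,\rho)-\sum_{i=1}^m\lambda_i\big(c_i(x)-w(c_i(x),s_i;\mu,\rho)\big).$$
   Context: $f:\mathbb{R}^n\to\mathbb{R}$ and $c=(c_1,\dots,c_m):\mathbb{R}^n\to\mathbb{R}^m$ are twice continuously differentiable; $\nabla c(x)\in\mathbb{R}^{n\times m}$ denotes the matrix whose $i$-th column is $\nabla c_i(x)$. $\mathbb{R}^m_{++}$ denotes vectors with all components positive. Note $w(a,b;\mu,\rho)>0$ for all $a,b$. *)

theory Defs
  imports "HOL-Analysis.Analysis"
begin

definition C2 :: "('a::euclidean_space \<Rightarrow> real) \<Rightarrow> bool" where
  "C2 g \<longleftrightarrow> (\<exists>(g' :: 'a \<Rightarrow> 'a \<Rightarrow>\<^sub>L real) (g'' :: 'a \<Rightarrow> 'a \<Rightarrow>\<^sub>L ('a \<Rightarrow>\<^sub>L real)).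
      (\<forall>x. (g has_derivative blinfun_apply (g' x)) (at x)) \<and>
      (\<forall>x. (g' has_derivative blinfun_apply (g'' x)) (at x)) \<and>
      continuous_on UNIV g'')"

definition wfun :: "real \<Rightarrow> real \<Rightarrow> real \<Rightarrow> real \<Rightarrow> real" where
  "wfun a b \<mu> \<rho> = (sqrt ((b - \<rho> * a)^2 + 4 * \<rho> * \<mu>) - (b - \<rho> * a)) / (2 * \<rho>)"

definition local_solution :: "('a::metric_space \<Rightarrow> real) \<Rightarrow> 'a set \<Rightarrow> 'a \<Rightarrow> bool" where
  "local_solution F S p \<longleftrightarrow> p \<in> S \<and> (\<exists>e>0. \<forall>q\<in>S. dist q p < e \<longrightarrow> F p \<le> F q)"

definition LB_obj :: "(real^'n \<Rightarrow> real) \<Rightarrow> real \<Rightarrow> ((real^'n) \<times> (real^'m)) \<Rightarrow> real" where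
  "LB_obj f \<mu> p = f (fst p) - \<mu> * (\<Sum>i\<in>UNIV. ln (snd p $ i))"

definition LB_feas :: "(real^'n \<Rightarrow> real^'m) \<Rightarrow> ((real^'n) \<times> (real^'m)) set" where
  "LB_feas c = {(x, z). (\<forall>i. z $ i > 0) \<and> c x - z = 0}"

definition MB_obj :: "(real^'n \<Rightarrow> real) \<Rightarrow> (real^'n \<Rightarrow> real^'m) \<Rightarrow> real \<Rightarrow> real \<Rightarrow> real^'m \<Rightarrow> real^'n \<Rightarrow> real" where
  "MB_obj f c \<mu> \<rho> s x = f x - \<mu> * (\<Sum>i\<in>UNIV. ln (wfun (c x $ i) (s $ i) \<mu> \<rho>))"

definition MB_feas :: "(real^'n \<Rightarrow> real^'m) \<Rightarrow> real \<Rightarrow> real \<Rightarrow> real^'m \<Rightarrow> (real^'n) set" where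
  "MB_feas c \<mu> \<rho> s = {x. \<forall>i. c x $ i - wfun (c x $ i) (s $ i) \<mu> \<rho> = 0}"

definition MB_Lag :: "(real^'n \<Rightarrow> real) \<Rightarrow> (real^'n \<Rightarrow> real^'m) \<Rightarrow> real \<Rightarrow> real \<Rightarrow> real^'n \<Rightarrow> real^'m \<Rightarrow> real^'m \<Rightarrow> real" where
  "MB_Lag f c \<mu> \<rho> x s lam = f x - \<mu> * (\<Sum>i\<in>UNIV. ln (wfun (c x $ i) (s $ i) \<mu> \<rho>))
     - (\<Sum>i\<in>UNIV. lam $ i * (c x $ i - wfun (c x $ i) (s $ i) \<mu> \<rho>))"

end

theory Submission
  imports Defs
begin

lemma GDERIV_sum_fin:
  assumes "finite A" "\<And>i. i \<in> A \<Longrightarrow> GDERIV (F i) x :> D i"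
  shows "GDERIV (\<lambda>y. \<Sum>i\<in>A. F i y) x :> (\<Sum>i\<in>A. D i)"
  using assms
proof (induction A rule: finite_induct)
  case empty then show ?case by (simp add: GDERIV_const)
next
  case (insert a A)
  then show ?case by (simp add: GDERIV_add)
qed

lemma C2_cont: "C2 g \<Longrightarrow> continuous_on UNIV g"
  unfolding C2_def
  by (meson continuous_at_imp_continuous_on has_derivative_continuous)

lemma w_eq: assumes "z > 0" "\<mu> > 0" "\<rho> > 0" shows "wfun z (\<mu> / z) \<mu> \<rho> = z"
proof -
  have "(\<mu>/z - \<rho>*z)^2 + 4*\<rho>*\<mu> = (\<mu>/z + \<rho>*z)^2"
    using assms by (simp add: power2_eq_square field_simps)
  moreover have "\<mu>/z + \<rho>*z > 0" using assms by (intro add_pos_pos divide_pos_pos mult_pos_pos)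
  ultimately have "sqrt ((\<mu>/z - \<rho>*z)^2 + 4*\<rho>*\<mu>) = \<mu>/z + \<rho>*z" by simp
  then show ?thesis using assms by (simp add: wfun_def field_simps)
qed

lemma w_deriv: assumes "\<mu> > 0" "\<rho> > 0" shows "\<exists>D. DERIV (\<lambda>a. wfun a b \<mu> \<rho>) a :> D"
proof -
  have "0 < (b - \<rho>*a)^2 + 4*\<rho>*\<mu>" using assms
    by (simp add: add_nonneg_pos)
  define Q where "Q = (\<lambda>a. (b - \<rho>*a)^2 + 4*\<rho>*\<mu>)"
  have dQ: "DERIV Q a :> 2 * (b - \<rho>*a) * (- \<rho>)" unfolding Q_def
    by (auto intro!: derivative_eq_intros)
  have "Q a > 0" unfolding Q_def using \<open>0 < (b - \<rho>*a)^2 + 4*\<rho>*\<mu>\<close> .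
  from DERIV_chain2[OF DERIV_real_sqrt[OF this] dQ]
  have dS: "DERIV (\<lambda>a. sqrt (Q a)) a :> inverse (sqrt (Q a)) / 2 * (2 * (b - \<rho>*a) * (- \<rho>))" .
  have dL: "DERIV (\<lambda>a. b - \<rho>*a) a :> - \<rho>"
    by (auto intro!: derivative_eq_intros)
  have "DERIV (\<lambda>a. (sqrt (Q a) - (b - \<rho>*a)) / (2*\<rho>)) a :> (inverse (sqrt (Q a)) / 2 * (2 * (b - \<rho>*a) * (- \<rho>)) - - \<rho>) / (2*\<rho>)"
    using DERIV_cdivide[OF DERIV_diff[OF dS dL], of "2*\<rho>"] .
  then show ?thesis unfolding wfun_def Q_def by blast
qed

lemma w_pos: assumes "\<mu> > 0" "\<rho> > 0" shows "wfun a b \<mu> \<rho> > 0"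
proof -
  have "\<bar>b - \<rho>*a\<bar> = sqrt ((b - \<rho>*a)^2)" by simp
  also have "\<dots> < sqrt ((b - \<rho>*a)^2 + 4*\<rho>*\<mu>)" using assms by (intro real_sqrt_less_mono) simp
  finally show ?thesis using assms unfolding wfun_def by (simp add: divide_pos_pos)
qed

theorem lemma2p1:
  fixes f :: "real^'n \<Rightarrow> real" and c :: "real^'n \<Rightarrow> real^'m"
    and \<mu> \<rho> :: real and s :: "real^'m"
  assumes "C2 f" and "\<forall>i. C2 (\<lambda>x. c x $ i)"
    and "\<mu> > 0" and "\<rho> > 0"
  shows
    "(\<forall>xs zs. local_solution (LB_obj f \<mu>) (LB_feas c) (xs, zs)
        \<and> (\<forall>i. c xs $ i = wfun (c xs $ i) (s $ i) \<mu> \<rho>)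
        \<longrightarrow> local_solution (MB_obj f c \<mu> \<rho> s) (MB_feas c \<mu> \<rho> s) xs)
     \<and>
     (\<forall>xs zs ss gf gc.
        GDERIV f xs :> gf \<and> (\<forall>i. GDERIV (\<lambda>x. c x $ i) xs :> gc i)
        \<and> c xs = zs \<and> (\<forall>i. zs $ i > 0)
        \<and> gf - (\<Sum>i\<in>UNIV. ss $ i *\<^sub>R gc i) = 0
        \<and> (\<forall>i. ss $ i = \<mu> / zs $ i)
        \<longrightarrow> (\<forall>i. c xs $ i = wfun (c xs $ i) (ss $ i) \<mu> \<rho>)
            \<and> GDERIV (\<lambda>x. MB_Lag f c \<mu> \<rho> x ss ss) xs :> 0)"
proof (rule conjI; intro allI impI)
  fix xs zs
  assume H: "local_solution (LB_obj f \<mu>) (LB_feas c) (xs, zs)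
        \<and> (\<forall>i. c xs $ i = wfun (c xs $ i) (s $ i) \<mu> \<rho>)"
  then obtain e where e: "e > 0" and loc: "\<forall>q\<in>LB_feas c. dist q (xs, zs) < e \<longrightarrow> LB_obj f \<mu> (xs, zs) \<le> LB_obj f \<mu> q"
    and feas: "(xs, zs) \<in> LB_feas c"
    unfolding local_solution_def by blast
  have zs: "zs = c xs" using feas by (simp add: LB_feas_def)
  have "continuous_on UNIV (\<lambda>x. \<chi> i. c x $ i)"
    using assms(2) C2_cont by (intro continuous_on_vec_lambda) auto
  hence cc: "continuous_on UNIV c" by simp
  have "continuous_on UNIV (\<lambda>x. (x, c x))"
    by (intro continuous_intros cc)
  hence "continuous (at xs) (\<lambda>x. (x, c x))"
    by (simp add: continuous_on_eq_continuous_at)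
  then obtain d where d: "d > 0" and dd: "\<forall>x. dist x xs < d \<longrightarrow> dist (x, c x) (xs, c xs) < e"
    using e unfolding continuous_at_eps_delta by blast
  show "local_solution (MB_obj f c \<mu> \<rho> s) (MB_feas c \<mu> \<rho> s) xs"
    unfolding local_solution_def
  proof (intro conjI exI[of _ d] d ballI impI)
    show "xs \<in> MB_feas c \<mu> \<rho> s" using H by (simp add: MB_feas_def)
  next
    fix q assume q: "q \<in> MB_feas c \<mu> \<rho> s" "dist q xs < d"
    have qe: "\<forall>i. wfun (c q $ i) (s $ i) \<mu> \<rho> = c q $ i" using q(1) by (simp add: MB_feas_def)
    have xe: "\<forall>i. wfun (c xs $ i) (s $ i) \<mu> \<rho> = c xs $ i" using H by simp
    have pos: "\<forall>i. c q $ i > 0"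
    proof
      fix i show "c q $ i > 0" using qe w_pos[OF assms(3,4), of "c q $ i" "s $ i"] by simp
    qed
    have "(q, c q) \<in> LB_feas c" using pos by (simp add: LB_feas_def)
    moreover have "dist (q, c q) (xs, zs) < e" using dd q(2) zs by simp
    ultimately have "LB_obj f \<mu> (xs, zs) \<le> LB_obj f \<mu> (q, c q)" using loc by blast
    then show "MB_obj f c \<mu> \<rho> s xs \<le> MB_obj f c \<mu> \<rho> s q"
      using qe xe zs by (simp add: MB_obj_def LB_obj_def)
  qed
next
  fix xs zs ss gf gc
  assume H: "GDERIV f xs :> gf \<and> (\<forall>i. GDERIV (\<lambda>x. c x $ i) xs :> gc i)
        \<and> c xs = zs \<and> (\<forall>i. zs $ i > 0)
        \<and> gf - (\<Sum>i\<in>UNIV. ss $ i *\<^sub>R gc i) = 0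
        \<and> (\<forall>i. ss $ i = \<mu> / zs $ i)"
  have weq: "\<forall>i. wfun (c xs $ i) (ss $ i) \<mu> \<rho> = c xs $ i"
    using H w_eq[OF _ assms(3,4)] by auto
  then have P1: "\<forall>i. c xs $ i = wfun (c xs $ i) (ss $ i) \<mu> \<rho>" by simp
  have "\<forall>i. \<exists>D. DERIV (\<lambda>a. wfun a (ss $ i) \<mu> \<rho>) (c xs $ i) :> D"
    using w_deriv[OF assms(3,4)] by blast
  from choice[OF this] obtain dg where dg0: "\<forall>i. DERIV (\<lambda>a. wfun a (ss $ i) \<mu> \<rho>) (c xs $ i) :> dg i"
    by blast
  have dg: "DERIV (\<lambda>a. wfun a (ss $ i) \<mu> \<rho>) (c xs $ i) :> dg i" for i using dg0 by blast
  have gw: "GDERIV (\<lambda>x. wfun (c x $ i) (ss $ i) \<mu> \<rho>) xs :> dg i *\<^sub>R gc i" for i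
    using GDERIV_DERIV_compose[of "\<lambda>x. c x $ i" xs "gc i" "\<lambda>a. wfun a (ss $ i) \<mu> \<rho>" "dg i"] H dg[of i] by simp
  have gl: "GDERIV (\<lambda>x. ln (wfun (c x $ i) (ss $ i) \<mu> \<rho>)) xs :> (1 / zs $ i) *\<^sub>R (dg i *\<^sub>R gc i)" for i
  proof -
    have "DERIV ln (wfun (c xs $ i) (ss $ i) \<mu> \<rho>) :> 1 / zs $ i"
      using weq H DERIV_ln_divide[of "zs $ i"] by simp
    then show ?thesis using GDERIV_DERIV_compose[OF gw] by blast
  qed
  have g1: "GDERIV (\<lambda>x. \<mu> * (\<Sum>i\<in>UNIV. ln (wfun (c x $ i) (ss $ i) \<mu> \<rho>))) xs
      :> \<mu> *\<^sub>R (\<Sum>i\<in>UNIV. (1 / zs $ i) *\<^sub>R (dg i *\<^sub>R gc i))"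
  proof -
    have "GDERIV (\<lambda>x. \<Sum>i\<in>UNIV. ln (wfun (c x $ i) (ss $ i) \<mu> \<rho>)) xs
      :> (\<Sum>i\<in>UNIV. (1 / zs $ i) *\<^sub>R (dg i *\<^sub>R gc i))"
      by (rule GDERIV_sum_fin[OF _ gl]) simp
    from GDERIV_DERIV_compose[OF this DERIV_cmult_Id[of \<mu>]] show ?thesis by simp
  qed
  have g2: "GDERIV (\<lambda>x. \<Sum>i\<in>UNIV. ss $ i * (c x $ i - wfun (c x $ i) (ss $ i) \<mu> \<rho>)) xs
      :> (\<Sum>i\<in>UNIV. ss $ i *\<^sub>R (gc i - dg i *\<^sub>R gc i))"
  proof (rule GDERIV_sum_fin, simp)
    fix i
    have "GDERIV (\<lambda>x. c x $ i - wfun (c x $ i) (ss $ i) \<mu> \<rho>) xs :> gc i - dg i *\<^sub>R gc i"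
      using GDERIV_diff[OF _ gw] H by blast
    from GDERIV_DERIV_compose[OF this DERIV_cmult_Id[of "ss $ i"]]
    show "GDERIV (\<lambda>x. ss $ i * (c x $ i - wfun (c x $ i) (ss $ i) \<mu> \<rho>)) xs :> ss $ i *\<^sub>R (gc i - dg i *\<^sub>R gc i)"
      by simp
  qed
  have g: "GDERIV (\<lambda>x. MB_Lag f c \<mu> \<rho> x ss ss) xs :>
     gf - \<mu> *\<^sub>R (\<Sum>i\<in>UNIV. (1 / zs $ i) *\<^sub>R (dg i *\<^sub>R gc i)) - (\<Sum>i\<in>UNIV. ss $ i *\<^sub>R (gc i - dg i *\<^sub>R gc i))"
    unfolding MB_Lag_def using GDERIV_diff[OF GDERIV_diff[OF _ g1] g2] H by blast
  have "\<mu> *\<^sub>R (\<Sum>i\<in>UNIV. (1 / zs $ i) *\<^sub>R (dg i *\<^sub>R gc i)) = (\<Sum>i\<in>UNIV. (ss $ i * dg i) *\<^sub>R gc i)"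
    using H by (simp add: scaleR_sum_right)
  moreover have "(\<Sum>i\<in>UNIV. ss $ i *\<^sub>R (gc i - dg i *\<^sub>R gc i)) =
      (\<Sum>i\<in>UNIV. ss $ i *\<^sub>R gc i) - (\<Sum>i\<in>UNIV. (ss $ i * dg i) *\<^sub>R gc i)"
    by (simp add: scaleR_diff_right sum_subtractf)
  ultimately have "gf - \<mu> *\<^sub>R (\<Sum>i\<in>UNIV. (1 / zs $ i) *\<^sub>R (dg i *\<^sub>R gc i)) - (\<Sum>i\<in>UNIV. ss $ i *\<^sub>R (gc i - dg i *\<^sub>R gc i)) = 0"
    using H by (simp add: algebra_simps)
  with g have "GDERIV (\<lambda>x. MB_Lag f c \<mu> \<rho> x ss ss) xs :> 0" by simp
  with P1 show "(\<forall>i. c xs $ i = wfun (c xs $ i) (ss $ i) \<mu> \<rho>) \<and> GDERIV (\<lambda>x. MB_Lag f c \<mu> \<rho> x ss ss) xs :> 0" by blast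
qed

end
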